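(* Let $w:\{0,1\}^L\to\mathbb{R}_{\ge 0}$ be a generic fitness landscape that induces the standard staircase triangulation, with genotypes written as subsets of $\{1,\dots,L\}$. Then: (i) if a single mutant $\{i\}$ is a peak, then every other peak contains $i$; in particular, two distinct single mutants cannot both be peaks; (ii) for distinct $i,j,k$, the double mutants $\{i,j\}$ and $\{j,k\}$ cannot both be peaks; (iii) for distinct $i,j,k,l$, the triple mutant $\{i,j,k\}$ and the double mutant $\{k,l\}$ cannot both be peaks.
   Context: A genotype $g\in\{0,1\}^L$ is identified with the set $\{i: g_i=1\}\subseteq\{1,\dots,L\}$ and with a vertex of $[0,1]^L$. The triangulation induced by $w$ is the regular subdivision of $[0,1]^L$ obtained by projecting the upper faces of $\mathrm{conv}\{(g,w_g)\}\subset\mathbb{R}^{L+1}$; $w$ is generic if all $w_g$ are distinct and this subdivision is a triangulation. A peak is a genotype all of whose Hamming neighbours (sets differing in exactly one element) have strictly lower fitness. The standard staircase triangulation consists of the $L!$ simplices $\{g_0\subset g_1\subset\dots\subset g_L\}$ with $g_0=\emptyset$, $g_L=\{1,\dots,L\}$ and $|g_k|=k$. *)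

theory Defs
  imports Complex_Main
begin

text \<open>Genotypes in {0,1}^L are identified with subsets of {1..L}.
  A fitness landscape is a function w :: nat set \<Rightarrow> real, of which only
  the values on genotypes matter.\<close>

definition genotypes :: "nat \<Rightarrow> nat set set" where
  "genotypes L = Pow {1..L}"

definition hamming_neighbour :: "nat \<Rightarrow> nat set \<Rightarrow> nat set \<Rightarrow> bool" where
  "hamming_neighbour L g h \<longleftrightarrow>
     g \<in> genotypes L \<and> h \<in> genotypes L \<and> card ((g - h) \<union> (h - g)) = 1"

definition is_peak :: "nat \<Rightarrow> (nat set \<Rightarrow> real) \<Rightarrow> nat set \<Rightarrow> bool" where
  "is_peak L w g \<longleftrightarrow> g \<in> genotypes L \<and>
     (\<forall>h. hamming_neighbour L g h \<longrightarrow> w h < w g)"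

definition staircase_simplex :: "nat \<Rightarrow> (nat \<Rightarrow> nat) \<Rightarrow> nat set set" where
  "staircase_simplex L \<pi> = {\<pi> ` {1..k} | k. k \<le> L}"

definition staircase_simplices :: "nat \<Rightarrow> nat set set set" where
  "staircase_simplices L = {staircase_simplex L \<pi> | \<pi>. bij_betw \<pi> {1..L} {1..L}}"

text \<open>An affine function on R^L evaluated at the vertex g of [0,1]^L:
  c + sum_{i in g} a_i.\<close>
definition affine_at :: "real \<Rightarrow> (nat \<Rightarrow> real) \<Rightarrow> nat set \<Rightarrow> real" where
  "affine_at c a g = c + (\<Sum>i\<in>g. a i)"

text \<open>A set S of vertices spans a cell of the regular subdivision induced by w
  (projection of an upper face of conv{(g,w_g)}) iff some non-vertical
  supporting hyperplane, i.e. the graph of an affine function h, lies weakly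
  above all lifted points and touches exactly the lifted points of S.\<close>
definition upper_cell :: "nat \<Rightarrow> (nat set \<Rightarrow> real) \<Rightarrow> nat set set \<Rightarrow> bool" where
  "upper_cell L w S \<longleftrightarrow> (\<exists>c a. \<forall>g\<in>genotypes L.
       (g \<in> S \<longrightarrow> affine_at c a g = w g) \<and> (g \<notin> S \<longrightarrow> w g < affine_at c a g))"

text \<open>Since the staircase
  simplices are full-dimensional and tile the cube, this is equivalent to the
  subdivision being exactly the staircase triangulation.\<close>
definition induces_staircase :: "nat \<Rightarrow> (nat set \<Rightarrow> real) \<Rightarrow> bool" where
  "induces_staircase L w \<longleftrightarrow> (\<forall>S\<in>staircase_simplices L. upper_cell L w S)"

text \<open>Generic: all fitness values distinct (the subdivision being a triangulation
  is already implied by inducing the staircase triangulation).\<close>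
definition generic :: "nat \<Rightarrow> (nat set \<Rightarrow> real) \<Rightarrow> bool" where
  "generic L w \<longleftrightarrow> inj_on w (genotypes L)"

end

theory Submission
  imports Defs
begin

lemma take_img:
  assumes "k \<le> length xs"
  shows "(\<lambda>m. xs ! (m - 1)) ` {1..k} = set (take k xs)"
proof -
  have "(\<lambda>m. xs ! (m - 1)) ` {1..k} = (\<lambda>n. xs ! n) ` {..<k}"
  proof (rule set_eqI, rule iffI)
    fix x assume "x \<in> (\<lambda>m. xs ! (m - 1)) ` {1..k}"
    then obtain m where "m \<in> {1..k}" "x = xs ! (m - 1)" by blast
    then show "x \<in> (\<lambda>n. xs ! n) ` {..<k}" by (intro image_eqI[of _ _ "m - 1"]) auto
  next
    fix x assume "x \<in> (\<lambda>n. xs ! n) ` {..<k}"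
    then obtain n where "n < k" "x = xs ! n" by blast
    then show "x \<in> (\<lambda>m. xs ! (m - 1)) ` {1..k}" by (intro image_eqI[of _ _ "n + 1"]) auto
  qed
  also have "\<dots> = set (take k xs)"
    using assms apply (auto simp: set_conv_nth)
    apply (metis nth_take)
    done
  finally show ?thesis .
qed

lemma key:
  assumes stair: "induces_staircase L w"
    and A: "A \<subseteq> {1..L}" and B: "B \<subseteq> {1..L}"
    and nAB: "\<not> A \<subseteq> B" and nBA: "\<not> B \<subseteq> A"
  shows "w B < w (A \<inter> B) + w (A \<union> B) - w A"
proof -
  have fin: "finite A" "finite B" using A B finite_subset by blast+
  define l1 where "l1 = sorted_list_of_set (A \<inter> B)"
  define l2 where "l2 = sorted_list_of_set (A - B)"
  define l3 where "l3 = sorted_list_of_set (B - A)"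
  define l4 where "l4 = sorted_list_of_set ({1..L} - (A \<union> B))"
  define xs where "xs = l1 @ l2 @ l3 @ l4"
  have s1: "set l1 = A \<inter> B" "distinct l1" using fin by (auto simp: l1_def)
  have s2: "set l2 = A - B" "distinct l2" using fin by (auto simp: l2_def)
  have s3: "set l3 = B - A" "distinct l3" using fin by (auto simp: l3_def)
  have s4: "set l4 = {1..L} - (A \<union> B)" "distinct l4" by (auto simp: l4_def)
  have dx: "distinct xs" unfolding xs_def using s1 s2 s3 s4 by auto
  have sx: "set xs = {1..L}" unfolding xs_def using s1 s2 s3 s4 A B by auto
  have lx: "length xs = L" using distinct_card[OF dx] sx by simp
  define \<pi> where "\<pi> = (\<lambda>m. xs ! (m - 1))"
  have img: "\<And>k. k \<le> L \<Longrightarrow> \<pi> ` {1..k} = set (take k xs)"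
    unfolding \<pi>_def using take_img lx by metis
  have bij: "bij_betw \<pi> {1..L} {1..L}"
  proof -
    have "inj_on \<pi> {1..L}"
      unfolding \<pi>_def inj_on_def using dx lx
      by (auto simp: nth_eq_iff_index_eq)
    moreover have "\<pi> ` {1..L} = {1..L}" using img[of L] lx sx by simp
    ultimately show ?thesis by (simp add: bij_betw_def)
  qed
  define S where "S = staircase_simplex L \<pi>"
  have "S \<in> staircase_simplices L" unfolding S_def staircase_simplices_def using bij by blast
  with stair obtain c a where ca: "\<forall>g\<in>genotypes L.
       (g \<in> S \<longrightarrow> affine_at c a g = w g) \<and> (g \<notin> S \<longrightarrow> w g < affine_at c a g)"
    unfolding induces_staircase_def upper_cell_def by blast
  have inS: "\<And>k. k \<le> L \<Longrightarrow> set (take k xs) \<in> S"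
    unfolding S_def staircase_simplex_def using img by blast
  have l1L: "length l1 \<le> L" "length l1 + length l2 \<le> L" "length l1 + length l2 + length l3 \<le> L"
    using lx by (auto simp: xs_def)
  have t1: "set (take (length l1) xs) = A \<inter> B" using s1 by (simp add: xs_def)
  have t2: "set (take (length l1 + length l2) xs) = A" using s1 s2 by (auto simp: xs_def)
  have t3: "set (take (length l1 + length l2 + length l3) xs) = A \<union> B"
    using s1 s2 s3 by (auto simp: xs_def)
  have BnS: "B \<notin> S"
  proof
    assume "B \<in> S"
    then obtain k where k: "B = \<pi> ` {1..k}" "k \<le> L" unfolding S_def staircase_simplex_def by blast
    then have Bk: "B = set (take k xs)" using img by simp
    show False
    proof (cases "k \<le> length l1 + length l2")
      case True
      then show False using set_take_subset_set_take[OF True, of xs] Bk t2 nBA by simp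
    next
      case False
      then show False using set_take_subset_set_take[of "length l1 + length l2" k xs] Bk t2 nAB by simp
    qed
  qed
  have g: "A \<inter> B \<in> genotypes L" "A \<in> genotypes L" "A \<union> B \<in> genotypes L" "B \<in> genotypes L"
    using A B by (auto simp: genotypes_def)
  have e1: "affine_at c a (A \<inter> B) = w (A \<inter> B)" using ca g inS[OF l1L(1)] t1 by metis
  have e2: "affine_at c a A = w A" using ca g inS[OF l1L(2)] t2 by metis
  have e3: "affine_at c a (A \<union> B) = w (A \<union> B)" using ca g inS[OF l1L(3)] t3 by metis
  have e4: "w B < affine_at c a B" using ca g BnS by blast
  have sB: "sum a B = sum a (A \<inter> B) + sum a (B - A)"
    using fin by (metis Int_commute sum.Int_Diff)
  have sU: "sum a (A \<union> B) = sum a A + sum a (B - A)"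
    using fin by (metis Un_Diff_cancel sum.union_disjoint Diff_disjoint finite_Diff)
  show ?thesis using e1 e2 e3 e4 sB sU unfolding affine_at_def by linarith
qed

lemma nb:
  assumes "g \<subseteq> {1..L}" "x \<in> {1..L}" "x \<notin> g"
  shows "hamming_neighbour L g (insert x g) \<and> hamming_neighbour L (insert x g) g"
proof -
  have "(g - insert x g) \<union> (insert x g - g) = {x}" "(insert x g - g) \<union> (g - insert x g) = {x}"
    using assms by auto
  then show ?thesis using assms unfolding hamming_neighbour_def genotypes_def by auto
qed

lemma pk_up:
  assumes "is_peak L w g" "x \<in> {1..L}" "x \<notin> g"
  shows "w (insert x g) < w g"
  using assms nb[of g L x] unfolding is_peak_def genotypes_def by auto

lemma pk_down:
  assumes "is_peak L w h" "x \<in> h"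
  shows "w (h - {x}) < w h"
proof -
  have h: "h \<subseteq> {1..L}" using assms unfolding is_peak_def genotypes_def by auto
  have "insert x (h - {x}) = h" using assms by auto
  moreover have "x \<in> {1..L}" "h - {x} \<subseteq> {1..L}" using h assms by auto
  ultimately have "hamming_neighbour L h (h - {x})" using nb[of "h - {x}" L x] by auto
  then show ?thesis using assms unfolding is_peak_def by auto
qed

theorem lemma1:
  fixes L :: nat and w :: "nat set \<Rightarrow> real"
  assumes nonneg: "\<forall>g\<in>genotypes L. w g \<ge> 0"
    and gen: "generic L w"
    and stair: "induces_staircase L w"
  shows "(\<forall>i\<in>{1..L}. is_peak L w {i} \<longrightarrow>
            (\<forall>g. is_peak L w g \<and> g \<noteq> {i} \<longrightarrow> i \<in> g))
       \<and> (\<forall>i\<in>{1..L}. \<forall>j\<in>{1..L}. i \<noteq> j \<longrightarrow> \<not> (is_peak L w {i} \<and> is_peak L w {j}))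
       \<and> (\<forall>i\<in>{1..L}. \<forall>j\<in>{1..L}. \<forall>k\<in>{1..L}. i \<noteq> j \<and> j \<noteq> k \<and> i \<noteq> k \<longrightarrow>
            \<not> (is_peak L w {i, j} \<and> is_peak L w {j, k}))
       \<and> (\<forall>i\<in>{1..L}. \<forall>j\<in>{1..L}. \<forall>k\<in>{1..L}. \<forall>l\<in>{1..L}.
            distinct [i, j, k, l] \<longrightarrow> \<not> (is_peak L w {i, j, k} \<and> is_peak L w {k, l}))"
proof -
  have P1: "\<forall>i\<in>{1..L}. is_peak L w {i} \<longrightarrow>
            (\<forall>g. is_peak L w g \<and> g \<noteq> {i} \<longrightarrow> i \<in> g)"
  proof (intro ballI impI allI)
    fix i g assume i: "i \<in> {1..L}" and pi: "is_peak L w {i}" and pg: "is_peak L w g \<and> g \<noteq> {i}"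
    show "i \<in> g"
    proof (rule ccontr)
      assume ni: "i \<notin> g"
      have gL: "g \<subseteq> {1..L}" using pg unfolding is_peak_def genotypes_def by auto
      have d: "w {} < w {i}" using pk_down[OF pi, of i] by simp
      show False
      proof (cases "g = {}")
        case True
        then show False using pk_up[of L w g i] i pg ni d by auto
      next
        case False
        have k: "w g < w ({i} \<inter> g) + w ({i} \<union> g) - w {i}"
          using key[OF stair, of "{i}" g] i gL ni False pg by auto
        have "{i} \<inter> g = {}" "{i} \<union> g = insert i g" using ni by auto
        then show False using k d pk_up[of L w g i] pg i ni by auto
      qed
    qed
  qed
  have P2: "\<forall>i\<in>{1..L}. \<forall>j\<in>{1..L}. i \<noteq> j \<longrightarrow> \<not> (is_peak L w {i} \<and> is_peak L w {j})"
    using P1 by blast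
  have P3: "\<forall>i\<in>{1..L}. \<forall>j\<in>{1..L}. \<forall>k\<in>{1..L}. i \<noteq> j \<and> j \<noteq> k \<and> i \<noteq> k \<longrightarrow>
            \<not> (is_peak L w {i, j} \<and> is_peak L w {j, k})"
  proof (intro ballI impI notI)
    fix i j k assume ijk: "i \<in> {1..L}" "j \<in> {1..L}" "k \<in> {1..L}" "i \<noteq> j \<and> j \<noteq> k \<and> i \<noteq> k"
      and p: "is_peak L w {i, j} \<and> is_peak L w {j, k}"
    have kk: "w {j, k} < w ({i,j} \<inter> {j,k}) + w ({i,j} \<union> {j,k}) - w {i,j}"
      using key[OF stair, of "{i,j}" "{j,k}"] ijk by auto
    have e: "{i,j} \<inter> {j,k} = {i,j} - {i}" "{i,j} \<union> {j,k} = insert i {j,k}" using ijk by auto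
    have "w ({i,j} - {i}) < w {i,j}" using pk_down[of L w "{i,j}" i] p by auto
    moreover have "w (insert i {j,k}) < w {j,k}" using pk_up[of L w "{j,k}" i] p ijk by auto
    ultimately show False using kk e by simp
  qed
  have P4: "\<forall>i\<in>{1..L}. \<forall>j\<in>{1..L}. \<forall>k\<in>{1..L}. \<forall>l\<in>{1..L}.
            distinct [i, j, k, l] \<longrightarrow> \<not> (is_peak L w {i, j, k} \<and> is_peak L w {k, l})"
  proof (intro ballI impI notI)
    fix i j k l assume ijk: "i \<in> {1..L}" "j \<in> {1..L}" "k \<in> {1..L}" "l \<in> {1..L}" "distinct [i, j, k, l]"
      and p: "is_peak L w {i, j, k} \<and> is_peak L w {k, l}"
    have kk: "w {k, l} < w ({i,j,k} \<inter> {k,l}) + w ({i,j,k} \<union> {k,l}) - w {i,j,k}"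
      using key[OF stair, of "{i,j,k}" "{k,l}"] ijk by auto
    have e: "{i,j,k} \<inter> {k,l} = {k,l} - {l}" "{i,j,k} \<union> {k,l} = insert l {i,j,k}" using ijk by auto
    have "w ({k,l} - {l}) < w {k,l}" using pk_down[of L w "{k,l}" l] p by auto
    moreover have "w (insert l {i,j,k}) < w {i,j,k}" using pk_up[of L w "{i,j,k}" l] p ijk by auto
    ultimately show False using kk e by simp
  qed
  show ?thesis using P1 P2 P3 P4 by blast
qed

end
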